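(* Let $K\subset\mathbb{R}^d$ be an OU set about $x_0\in\mathbb{R}^d$ (in the sense of sets in $\mathbb{R}^d$). Then $K$ is Lebesgue measurable, $\bar K$ and $\overline{K^\circ}$ are OU sets about $x_0$, and $\lambda(K^\circ)=\lambda(K)=\lambda(\bar K)$.
   Context: A set $K\subset\mathbb{R}^d$ is OU about $x_0=(x_{10},\dots,x_{d0})$ if for every $x\in K$ the closed rectangle with edges parallel to the axes and opposite vertices $x_0$ and $x$ lies in $K$, i.e. $(\eta_1x_1+(1-\eta_1)x_{10},\dots,\eta_dx_d+(1-\eta_d)x_{d0})\in K$ for all $\eta_i\in[0,1]$. $\lambda$ is Lebesgue measure; $K^\circ$, $\bar K$ denote interior and closure. *)

theory Defs
  imports "HOL-Analysis.Analysis"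
begin

text \<open>K is OU about x0: for every x in K, the closed axis-parallel box with
opposite vertices x0 and x lies in K.\<close>
definition OU_about :: "(real ^ 'd) set \<Rightarrow> real ^ 'd \<Rightarrow> bool" where
  "OU_about K x0 \<longleftrightarrow>
     (\<forall>x\<in>K. \<forall>\<eta> :: 'd \<Rightarrow> real. (\<forall>i. 0 \<le> \<eta> i \<and> \<eta> i \<le> 1) \<longrightarrow>
        (\<chi> i. \<eta> i * x $ i + (1 - \<eta> i) * x0 $ i) \<in> K)"

end

theory Submission
  imports Defs
begin


lemma between_in:
  fixes K :: "(real ^ 'd) set"
  assumes OU: "OU_about K x0" and z: "z \<in> K"
    and btw: "\<And>i. (x0$i \<le> w$i \<and> w$i \<le> z$i) \<or> (z$i \<le> w$i \<and> w$i \<le> x0$i)"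
  shows "w \<in> K"
proof -
  define \<eta> where "\<eta> i = (if z$i = x0$i then 0 else (w$i - x0$i)/(z$i - x0$i))" for i
  have e: "0 \<le> \<eta> i \<and> \<eta> i \<le> 1" for i
    using btw[of i] by (auto simp: \<eta>_def divide_simps)
  have "(\<chi> i. \<eta> i * z $ i + (1 - \<eta> i) * x0 $ i) = w"
  proof (subst vec_eq_iff, intro allI)
    fix i
    show "(\<chi> i. \<eta> i * z $ i + (1 - \<eta> i) * x0 $ i) $ i = w $ i"
    proof (cases "z$i = x0$i")
      case True thus ?thesis using btw[of i] by (auto simp: \<eta>_def)
    next
      case False
      have "\<eta> i * z $ i + (1 - \<eta> i) * x0 $ i = x0$i + \<eta> i * (z$i - x0$i)" by algebra
      also have "\<eta> i * (z$i - x0$i) = w$i - x0$i" using False by (simp add: \<eta>_def)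
      finally show ?thesis by simp
    qed
  qed
  with OU z e show ?thesis unfolding OU_about_def by metis
qed

lemma closure_OU_gen:
  fixes A :: "(real ^ 'd) set"
  assumes "\<And>x \<eta>. x \<in> A \<Longrightarrow> (\<forall>i. 0 \<le> \<eta> i \<and> \<eta> i \<le> 1) \<Longrightarrow>
      (\<chi> i. \<eta> i * x $ i + (1 - \<eta> i) * x0 $ i) \<in> closure A"
  shows "OU_about (closure A) x0"
  unfolding OU_about_def
proof (intro ballI allI impI)
  fix x and \<eta> :: "'d \<Rightarrow> real"
  assume x: "x \<in> closure A" and e: "\<forall>i. 0 \<le> \<eta> i \<and> \<eta> i \<le> 1"
  let ?f = "\<lambda>x::real^'d. (\<chi> i. \<eta> i * x $ i + (1 - \<eta> i) * x0 $ i)"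
  have "?f ` closure A \<subseteq> closure A"
    by (rule image_closure_subset) (use assms e in \<open>auto intro!: continuous_intros\<close>)
  with x show "?f x \<in> closure A" by blast
qed

lemma comp_lt:
  fixes u v :: "real ^ 'd"
  assumes "dist u v < e" shows "\<bar>u$i - v$i\<bar> < e"
proof -
  have "\<bar>(u - v)$i\<bar> \<le> norm (u - v)" using component_le_norm_cart[of "u - v" i] by simp
  thus ?thesis using assms by (simp add: dist_norm)
qed

lemma key_interior:
  fixes K :: "(real ^ 'd) set"
  assumes OU: "OU_about K x0" and x: "x \<in> closure K" and ne: "\<And>i. x$i \<noteq> x0$i"
    and t: "0 < t" "t < 1"
  shows "t *\<^sub>R x + (1 - t) *\<^sub>R x0 \<in> interior K"
proof -
  define m where "m = Min (range (\<lambda>i. \<bar>x$i - x0$i\<bar>))"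
  have "m \<in> range (\<lambda>i. \<bar>x$i - x0$i\<bar>)" unfolding m_def by (rule Min_in) auto
  then have mpos: "m > 0" using ne by auto
  have mle: "m \<le> \<bar>x$i - x0$i\<bar>" for i unfolding m_def by (rule Min_le) auto
  define \<delta> where "\<delta> = (1 - t) / 2 * m"
  have "\<delta> > 0" using mpos t by (simp add: \<delta>_def)
  then obtain z where z: "z \<in> K" "dist z x < \<delta>" using x closure_approachable by metis
  define \<epsilon> where "\<epsilon> = min t ((1 - t) / 2) * m"
  have epos: "\<epsilon> > 0" using mpos t by (simp add: \<epsilon>_def)
  have e1: "\<epsilon> \<le> t * m" and e2: "\<epsilon> \<le> (1 - t) / 2 * m" using mpos
    by (simp_all add: \<epsilon>_def mult_right_mono min_def)
  let ?y = "t *\<^sub>R x + (1 - t) *\<^sub>R x0"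
  have "ball ?y \<epsilon> \<subseteq> K"
  proof
    fix w assume "w \<in> ball ?y \<epsilon>"
    then have wd: "dist w ?y < \<epsilon>" by (simp add: dist_commute)
    show "w \<in> K"
    proof (rule between_in[OF OU z(1)])
      fix i
      have w1: "\<bar>w$i - (t * x$i + (1 - t) * x0$i)\<bar> < \<epsilon>" using comp_lt[OF wd, of i] by simp
      have z1: "\<bar>z$i - x$i\<bar> < \<delta>" using comp_lt[OF z(2), of i] .
      have p1: "t * m \<le> t * \<bar>x$i - x0$i\<bar>" using mle[of i] t by (simp add: mult_left_mono)
      have p2: "(1 - t) * m \<le> (1 - t) * \<bar>x$i - x0$i\<bar>" using mle[of i] t by (simp add: mult_left_mono)
      show "(x0$i \<le> w$i \<and> w$i \<le> z$i) \<or> (z$i \<le> w$i \<and> w$i \<le> x0$i)"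
      proof (cases "x$i > x0$i")
        case True
        then have "\<bar>x$i - x0$i\<bar> = x$i - x0$i" by simp
        then show ?thesis using w1 z1 p1 p2 e1 e2 unfolding \<delta>_def
          by (auto simp: abs_if algebra_simps split: if_splits)
      next
        case False
        then have "\<bar>x$i - x0$i\<bar> = x0$i - x$i" by simp
        then show ?thesis using w1 z1 p1 p2 e1 e2 unfolding \<delta>_def
          by (auto simp: abs_if algebra_simps split: if_splits)
      qed
    qed
  qed
  then show ?thesis using epos mem_interior by blast
qed

lemma int_OU:
  fixes K :: "(real ^ 'd) set"
  assumes OU: "OU_about K x0" and x: "x \<in> interior K" and e: "\<forall>i. 0 \<le> \<eta> i \<and> \<eta> i \<le> 1"
  shows "(\<chi> i. \<eta> i * x $ i + (1 - \<eta> i) * x0 $ i) \<in> closure (interior K)"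
proof -
  obtain r where r: "r > 0" "ball x r \<subseteq> K" using x mem_interior by blast
  define s :: "real^'d" where "s = (\<chi> i. if x$i \<ge> x0$i then 1 else -1)"
  have "s \<noteq> 0" by (auto simp: s_def vec_eq_iff)
  then have ns: "norm s > 0" by simp
  define c where "c = r / (2 * norm s)"
  have cpos: "c > 0" using r ns by (simp add: c_def)
  define x' where "x' = x + c *\<^sub>R s"
  have "dist x x' = r / 2" using ns r cpos by (simp add: x'_def dist_norm c_def)
  then have x'K: "x' \<in> K" using r by auto
  have x'i: "x'$i = (if x$i \<ge> x0$i then x$i + c else x$i - c)" for i
    by (simp add: x'_def s_def)
  define lo :: "real^'d" where "lo = (\<chi> i. min (x0$i) (x'$i))"
  define hi :: "real^'d" where "hi = (\<chi> i. max (x0$i) (x'$i))"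
  have boxK: "box lo hi \<subseteq> K"
  proof
    fix w assume "w \<in> box lo hi"
    then have w: "lo$i < w$i \<and> w$i < hi$i" for i by (simp add: mem_box_cart)
    show "w \<in> K"
    proof (rule between_in[OF OU x'K])
      fix i show "(x0$i \<le> w$i \<and> w$i \<le> x'$i) \<or> (x'$i \<le> w$i \<and> w$i \<le> x0$i)"
        using w[of i] by (auto simp: lo_def hi_def min_def max_def split: if_splits)
    qed
  qed
  have "box lo hi \<subseteq> interior K" by (rule interior_maximal[OF boxK open_box])
  then have cl: "closure (box lo hi) \<subseteq> closure (interior K)" by (rule closure_mono)
  have "(1/2) *\<^sub>R (lo + hi) \<in> box lo hi"
    using cpos by (auto simp: mem_box_cart lo_def hi_def x'i min_def max_def)
  then have ne: "box lo hi \<noteq> {}" by blast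
  have "(\<chi> i. \<eta> i * x $ i + (1 - \<eta> i) * x0 $ i) \<in> cbox lo hi"
  proof (unfold mem_box_cart(2), intro allI)
    fix i
    have eq: "\<eta> i * x $ i + (1 - \<eta> i) * x0 $ i = x0$i + \<eta> i * (x$i - x0$i)" by algebra
    show "lo $ i \<le> (\<chi> i. \<eta> i * x $ i + (1 - \<eta> i) * x0 $ i) $ i \<and>
          (\<chi> i. \<eta> i * x $ i + (1 - \<eta> i) * x0 $ i) $ i \<le> hi $ i"
    proof (cases "x$i \<ge> x0$i")
      case True
      have "0 \<le> \<eta> i * (x$i - x0$i)" using e True by simp
      moreover have "\<eta> i * (x$i - x0$i) \<le> x$i - x0$i" using e True by (simp add: mult_left_le_one_le)
      ultimately show ?thesis using True cpos by (simp add: eq lo_def hi_def x'i)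
    next
      case False
      have a: "0 \<le> \<eta> i * (x0$i - x$i)" using e False by simp
      have b: "\<eta> i * (x0$i - x$i) \<le> x0$i - x$i" using e False by (simp add: mult_left_le_one_le)
      have c1: "\<eta> i * (x$i - x0$i) \<le> 0" and c2: "x$i - x0$i \<le> \<eta> i * (x$i - x0$i)"
        using a b by (simp_all add: right_diff_distrib)
      show ?thesis using False apply (simp add: eq lo_def hi_def x'i)
        using c1 c2 cpos by linarith
    qed
  qed
  then show ?thesis using cl closure_box[OF ne] by blast
qed

lemma lim_aux:
  fixes a b :: real and d :: nat
  assumes "\<And>t. 0 < t \<Longrightarrow> t < 1 \<Longrightarrow> t^d * a \<le> b"
  shows "a \<le> b"
proof (rule tendsto_le[of "at_left (1::real)" "\<lambda>_. b" b "\<lambda>t. t^d * a" a])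
  show "at_left (1::real) \<noteq> bot" by simp
  show "((\<lambda>_. b) \<longlongrightarrow> b) (at_left 1)" by simp
  have "((\<lambda>t::real. t^d * a) \<longlongrightarrow> 1^d * a) (at_left 1)"
    by (intro tendsto_intros)
  then show "((\<lambda>t::real. t^d * a) \<longlongrightarrow> a) (at_left 1)" by simp
  have "eventually (\<lambda>t::real. t \<in> {0<..<1}) (at_left 1)" by (rule eventually_at_left_real) simp
  then show "eventually (\<lambda>t. t^d * a \<le> b) (at_left 1)"
    by eventually_elim (use assms in auto)
qed

lemma hyper_negl: "negligible {x::real^'d. x$i = c}"
proof -
  have "{x::real^'d. x$i = c} = {x. x \<bullet> axis i 1 = c}" by (simp add: cart_eq_inner_axis)
  also have "negligible \<dots>" by (rule negligible_standard_hyperplane) simp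
  finally show ?thesis .
qed

lemma closed_leb: "closed S \<Longrightarrow> (S::(real^'d) set) \<in> sets lebesgue"
  by (metis sets_completionI_sets borel_closed lborelD)

lemma open_leb: "open S \<Longrightarrow> (S::(real^'d) set) \<in> sets lebesgue"
  by (metis sets_completionI_sets borel_open lborelD)

lemma boundary_ball_negl:
  fixes K :: "(real ^ 'd) set"
  assumes OU: "OU_about K x0"
  shows "negligible ((closure K - interior K) \<inter> ball x0 r)"
proof -
  define H where "H = (\<Union>i. {x::real^'d. x$i = x0$i})"
  have Hn: "negligible H" unfolding H_def by (rule negligible_Union) (auto intro: hyper_negl)
  then have Hnull: "H \<in> null_sets lebesgue" by (simp add: negligible_iff_null_sets)
  define B where "B = ball x0 r"
  define C where "C = closure K \<inter> B"
  define I where "I = interior K \<inter> B"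
  define S where "S = C - H"
  have Cl: "C \<in> lmeasurable" unfolding C_def B_def
    by (rule bounded_set_imp_lmeasurable) (auto intro: closed_leb open_leb)
  have Il: "I \<in> lmeasurable" unfolding I_def B_def
    by (rule bounded_set_imp_lmeasurable) (auto intro: open_leb)
  have Sl: "S \<in> lmeasurable" unfolding S_def using Cl Hnull by (auto intro: fmeasurable_Diff)
  have IC: "I \<subseteq> C" unfolding I_def C_def using interior_subset closure_subset by blast
  have mS: "measure lebesgue S = measure lebesgue C"
    unfolding S_def using Cl Hnull by (simp add: measure_Diff_null_set)
  have "t^CARD('d) * measure lebesgue S \<le> measure lebesgue I" if t: "0 < t" "t < 1" for t
  proof -
    let ?T = "\<lambda>y::real^'d. t *\<^sub>R y + (1 - t) *\<^sub>R x0"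
    have sub: "?T ` S \<subseteq> I"
    proof
      fix z assume "z \<in> ?T ` S"
      then obtain y where y: "y \<in> S" "z = ?T y" by blast
      then have yK: "y \<in> closure K" and yB: "dist x0 y < r" and yH: "\<And>i. y$i \<noteq> x0$i"
        by (auto simp: S_def C_def B_def H_def)
      have "z \<in> interior K" using key_interior[OF OU yK yH t] y by simp
      moreover have "dist x0 z = t * dist x0 y"
      proof -
        have "x0 - z = t *\<^sub>R (x0 - y)" using y(2) by (simp add: algebra_simps)
        then show ?thesis using t by (simp add: dist_norm)
      qed
      moreover have "t * dist x0 y \<le> dist x0 y" using t by (simp add: mult_left_le_one_le)
      then have "t * dist x0 y < r" using yB by linarith
      ultimately show "z \<in> I" by (simp add: I_def B_def)
    qed
    have "emeasure lebesgue (?T ` S) = \<bar>t\<bar> ^ DIM(real^'d) * emeasure lebesgue S"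
      by (rule emeasure_lebesgue_affine)
    also have "\<dots> = ennreal (t^CARD('d) * measure lebesgue S)"
      using Sl t by (simp add: emeasure_eq_measure2 ennreal_mult'' ennreal_power)
    finally have "ennreal (t^CARD('d) * measure lebesgue S) \<le> emeasure lebesgue I"
      using emeasure_mono[OF sub] Il by (metis fmeasurableD)
    also have "\<dots> = ennreal (measure lebesgue I)" using Il by (simp add: emeasure_eq_measure2)
    finally show ?thesis by (simp add: ennreal_le_iff)
  qed
  then have "measure lebesgue S \<le> measure lebesgue I" by (rule lim_aux)
  then have "measure lebesgue C \<le> measure lebesgue I" using mS by simp
  moreover have "measure lebesgue (C - I) = measure lebesgue C - measure lebesgue I"
    using Cl Il IC by (intro measure_Diff) (auto simp: fmeasurable_def)
  moreover have "measure lebesgue I \<le> measure lebesgue C"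
    using Cl Il IC by (intro measure_mono_fmeasurable) auto
  ultimately have "measure lebesgue (C - I) = 0" by simp
  moreover have "C - I \<in> lmeasurable" using Cl Il by (auto intro: fmeasurable_Diff)
  ultimately have "negligible (C - I)" by (simp add: negligible_iff_measure0)
  moreover have "C - I = (closure K - interior K) \<inter> ball x0 r" by (auto simp: C_def I_def B_def)
  ultimately show ?thesis by simp
qed

theorem mainTheorem11:
  fixes K :: "(real ^ 'd) set" and x0 :: "real ^ 'd"
  assumes "OU_about K x0"
  shows "K \<in> sets lebesgue \<and> OU_about (closure K) x0 \<and> OU_about (closure (interior K)) x0 \<and>
         emeasure lebesgue (interior K) = emeasure lebesgue K \<and>
         emeasure lebesgue K = emeasure lebesgue (closure K)"
proof -
  have eq: "closure K - interior K = (\<Union>n. (closure K - interior K) \<inter> ball x0 (real n))"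
  proof (intro set_eqI iffI)
    fix y assume y: "y \<in> closure K - interior K"
    obtain n where "dist x0 y < real n" using reals_Archimedean2 by blast
    then show "y \<in> (\<Union>n. (closure K - interior K) \<inter> ball x0 (real n))" using y by auto
  qed auto
  have N: "negligible (closure K - interior K)"
    by (subst eq, rule negligible_Union_nat, rule boundary_ball_negl[OF assms])
  have sub: "K - interior K \<subseteq> closure K - interior K" using closure_subset by blast
  have "negligible (K - interior K)" by (rule negligible_subset[OF N sub])
  then have "K - interior K \<in> sets lebesgue" by (simp add: negligible_iff_null_sets null_setsD2)
  moreover have "interior K \<in> sets lebesgue" by (simp add: open_leb)
  ultimately have "(K - interior K) \<union> interior K \<in> sets lebesgue" by blast
  moreover have "(K - interior K) \<union> interior K = K" using interior_subset by blast
  ultimately have Km: "K \<in> sets lebesgue" by simp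
  have O1: "OU_about (closure K) x0"
    by (rule closure_OU_gen) (use assms closure_subset in \<open>unfold OU_about_def, blast\<close>)
  have O2: "OU_about (closure (interior K)) x0"
    by (rule closure_OU_gen) (rule int_OU[OF assms])
  have Nnull: "closure K - interior K \<in> null_sets lebesgue" using N by (simp add: negligible_iff_null_sets)
  have "emeasure lebesgue (closure K) = emeasure lebesgue (interior K \<union> (closure K - interior K))"
    using interior_subset closure_subset by (metis Un_Diff_cancel Un_absorb1 subset_trans)
  also have "\<dots> = emeasure lebesgue (interior K)"
    by (rule emeasure_Un_null_set[OF _ Nnull]) (simp add: open_leb)
  finally have e: "emeasure lebesgue (closure K) = emeasure lebesgue (interior K)" .
  have m1: "emeasure lebesgue (interior K) \<le> emeasure lebesgue K"
    by (rule emeasure_mono[OF interior_subset Km])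
  have m2: "emeasure lebesgue K \<le> emeasure lebesgue (closure K)"
    by (rule emeasure_mono[OF closure_subset]) (simp add: closed_leb)
  show ?thesis using Km O1 O2 m1 m2 e by (metis order_antisym)
qed

end
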